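(* Let $f\in\mathbb{C}[[y,t,x]]$, $\lambda\in\mathbb{C}$, and let $P:\mathbb{C}\to\mathbb{C}$ be a monic polynomial. Then there exist $g,h\in\mathbb{C}[[y,t,x]]$ such that $\operatorname{Conv}_\varphi(g)=P^{-1}(\operatorname{Conv}_\varphi(f))$ and $\operatorname{Conv}_\varphi(h)=\lambda\cdot\operatorname{Conv}_\varphi(f)=\{\lambda s: s\in\operatorname{Conv}_\varphi(f)\}$.
   Context: Let $x=(x_1,\dots,x_n)$. A formal power series is convergent if its coefficients satisfy $|a_\alpha|\le C^{|\alpha|}$ for some $C$ and all $\alpha\ne0$. Fix a convergent power series $\varphi(t,x)=\sum_{j\ge1}b_j(x)t^j$ with convergent $b_j(x)\in\mathbb{C}[[x]]$ and $b_1(0)=1$. For $s\in\mathbb{C}$ put $\varphi(s,t,x)=s\,b_1(x)t+\sum_{j\ge2}b_j(x)t^j$. For $f\in\mathbb{C}[[y,t,x]]$, $\operatorname{Conv}_\varphi(f)=\{s\in\mathbb{C}: f(\varphi(s,t,x),t,x)\text{ converges as a power series in }(t,x)\}$. *)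

theory Defs
  imports Complex_Main "HOL-Computational_Algebra.Polynomial"
begin

text \<open>Multi-indices for x = (x_1,...,x_n) are functions nat => nat vanishing at
  all i >= n (indices 0..n-1 stand for x_1..x_n).  Coefficients at other
  (invalid) indices are irrelevant and never used.\<close>

definition valid_idx :: "nat \<Rightarrow> (nat \<Rightarrow> nat) \<Rightarrow> bool" where
  "valid_idx n \<gamma> \<longleftrightarrow> (\<forall>i\<ge>n. \<gamma> i = 0)"

definition idx_size :: "nat \<Rightarrow> (nat \<Rightarrow> nat) \<Rightarrow> nat" where
  "idx_size n \<gamma> = (\<Sum>i<n. \<gamma> i)"

text \<open>A power series in (t,x): coefficient of t^a x^gamma is F (a, gamma).\<close>
type_synonym ser = "nat \<times> (nat \<Rightarrow> nat) \<Rightarrow> complex"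

text \<open>A power series in (y,t,x): coefficient of y^k t^a x^gamma is f k a gamma.\<close>
type_synonym ser3 = "nat \<Rightarrow> nat \<Rightarrow> (nat \<Rightarrow> nat) \<Rightarrow> complex"

definition conv_x :: "nat \<Rightarrow> ((nat \<Rightarrow> nat) \<Rightarrow> complex) \<Rightarrow> bool" where
  "conv_x n B \<longleftrightarrow> (\<exists>C::real. \<forall>\<gamma>. valid_idx n \<gamma> \<and> \<gamma> \<noteq> (\<lambda>_. 0) \<longrightarrow>
      norm (B \<gamma>) \<le> C ^ idx_size n \<gamma>)"

definition conv_tx :: "nat \<Rightarrow> ser \<Rightarrow> bool" where
  "conv_tx n F \<longleftrightarrow> (\<exists>C::real. \<forall>a \<gamma>. valid_idx n \<gamma> \<and> (a, \<gamma>) \<noteq> (0, (\<lambda>_. 0)) \<longrightarrow>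
      norm (F (a, \<gamma>)) \<le> C ^ (a + idx_size n \<gamma>))"

definition ser_one :: ser where
  "ser_one = (\<lambda>(a, \<gamma>). if a = 0 \<and> \<gamma> = (\<lambda>_. 0) then 1 else 0)"

definition ser_mult :: "ser \<Rightarrow> ser \<Rightarrow> ser" where
  "ser_mult F G = (\<lambda>(m, \<beta>). \<Sum>a\<le>m. \<Sum>\<gamma>\<in>{\<gamma>. \<forall>i. \<gamma> i \<le> \<beta> i}.
      F (a, \<gamma>) * G (m - a, (\<lambda>i. \<beta> i - \<gamma> i)))"

primrec ser_pow :: "ser \<Rightarrow> nat \<Rightarrow> ser" where
  "ser_pow F 0 = ser_one"
| "ser_pow F (Suc k) = ser_mult F (ser_pow F k)"

text \<open>phi(s,t,x) = s b_1(x) t + sum_{j>=2} b_j(x) t^j; b j gamma is the coefficient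
  of x^gamma in b_j (b 0 is ignored).\<close>
definition phi_s :: "(nat \<Rightarrow> (nat \<Rightarrow> nat) \<Rightarrow> complex) \<Rightarrow> complex \<Rightarrow> ser" where
  "phi_s b s = (\<lambda>(j, \<gamma>). if j = 0 then 0 else if j = 1 then s * b 1 \<gamma> else b j \<gamma>)"

definition phi_ser :: "(nat \<Rightarrow> (nat \<Rightarrow> nat) \<Rightarrow> complex) \<Rightarrow> ser" where
  "phi_ser b = (\<lambda>(j, \<gamma>). if j = 0 then 0 else b j \<gamma>)"

text \<open>Substitution f(P(t,x), t, x) for P without t^0 term:
  sum_k f_k(t,x) P^k, where only k <= m contributes to the t^m coefficient.\<close>
definition subst_y :: "ser3 \<Rightarrow> ser \<Rightarrow> ser" where
  "subst_y f P = (\<lambda>(m, \<beta>). \<Sum>k\<le>m. ser_mult (\<lambda>(a, \<gamma>). f k a \<gamma>) (ser_pow P k) (m, \<beta>))"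

definition Conv_phi :: "nat \<Rightarrow> (nat \<Rightarrow> (nat \<Rightarrow> nat) \<Rightarrow> complex) \<Rightarrow> ser3 \<Rightarrow> complex set" where
  "Conv_phi n b f = {s. conv_tx n (subst_y f (phi_s b s))}"

end

theory Submission
  imports Defs
begin


definition Lser :: "(nat \<Rightarrow> (nat \<Rightarrow> nat) \<Rightarrow> complex) \<Rightarrow> ser" where
  "Lser b = (\<lambda>(a, \<gamma>). if a = 1 then b 1 \<gamma> else 0)"
definition Rser :: "(nat \<Rightarrow> (nat \<Rightarrow> nat) \<Rightarrow> complex) \<Rightarrow> ser" where
  "Rser b = (\<lambda>(a, \<gamma>). if 2 \<le> a then b a \<gamma> else 0)"

lemma phi_split: "phi_s b s = (\<lambda>i. s * Lser b i + Rser b i)"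
  by (auto simp: phi_s_def Lser_def Rser_def fun_eq_iff)

lemma ser_mult_lin_left:
  "ser_mult (\<lambda>i. s * F i + G i) H = (\<lambda>i. s * ser_mult F H i + ser_mult G H i)"
  by (auto simp: ser_mult_def fun_eq_iff algebra_simps sum.distrib sum_distrib_left)

lemma ser_mult_sum_right:
  "ser_mult F (\<lambda>i. \<Sum>j\<in>J. c j * G j i) i = (\<Sum>j\<in>J. c j * ser_mult F (G j) i)"
proof -
  obtain m \<beta> where i: "i = (m, \<beta>)" by (cases i)
  show ?thesis unfolding i ser_mult_def
    by (simp add: sum_distrib_left sum_distrib_right algebra_simps sum.swap[of _ J])
qed

lemma ser_mult_zero_right[simp]: "ser_mult F (\<lambda>_. 0) = (\<lambda>_. 0)"
  by (auto simp: ser_mult_def fun_eq_iff)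

primrec E :: "(nat \<Rightarrow> (nat \<Rightarrow> nat) \<Rightarrow> complex) \<Rightarrow> nat \<Rightarrow> nat \<Rightarrow> ser" where
  "E b 0 j = (if j = 0 then ser_one else (\<lambda>_. 0))"
| "E b (Suc k) j = (\<lambda>i. (if j = 0 then 0 else ser_mult (Lser b) (E b k (j - 1)) i)
                         + ser_mult (Rser b) (E b k j) i)"

lemma E_gt: "k < j \<Longrightarrow> E b k j = (\<lambda>_. 0)"
proof (induction k arbitrary: j)
  case 0 then show ?case by simp
next
  case (Suc k)
  then show ?case by (simp add: Suc.IH)
qed

lemma pow_expand: "ser_pow (phi_s b s) k = (\<lambda>i. \<Sum>j\<le>k. s ^ j * E b k j i)"
proof (induction k)
  case 0
  show ?case by (simp add: fun_eq_iff)
next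
  case (Suc k)
  show ?case
  proof
    fix i
    have "ser_pow (phi_s b s) (Suc k) i =
        s * (\<Sum>j\<le>k. s ^ j * ser_mult (Lser b) (E b k j) i) + (\<Sum>j\<le>k. s ^ j * ser_mult (Rser b) (E b k j) i)"
      apply (simp only: ser_pow.simps Suc.IH)
      apply (subst (1) phi_split)
      by (simp add: ser_mult_lin_left ser_mult_sum_right)
    also have "\<dots> = (\<Sum>j\<le>Suc k. s ^ j * E b (Suc k) j i)"
    proof -
      have 1: "(\<Sum>j\<le>Suc k. s ^ j * (if j = 0 then 0 else ser_mult (Lser b) (E b k (j - 1)) i))
          = s * (\<Sum>j\<le>k. s ^ j * ser_mult (Lser b) (E b k j) i)"
        by (subst sum.atMost_Suc_shift) (simp add: sum_distrib_left algebra_simps)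
      have 2: "(\<Sum>j\<le>Suc k. s ^ j * ser_mult (Rser b) (E b k j) i)
          = (\<Sum>j\<le>k. s ^ j * ser_mult (Rser b) (E b k j) i)"
        by (simp add: E_gt)
      show ?thesis by (simp only: E.simps distrib_left sum.distrib 1 2)
    qed
    finally show "ser_pow (phi_s b s) (Suc k) i = (\<Sum>j\<le>Suc k. s ^ j * E b (Suc k) j i)" .
  qed
qed

lemma ser_mult_zeroI:
  assumes "\<And>a \<gamma>. a \<le> m \<Longrightarrow> F (a, \<gamma>) = 0 \<or> G (m - a, \<lambda>i. \<beta> i - \<gamma> i) = 0"
  shows "ser_mult F G (m, \<beta>) = 0"
  unfolding ser_mult_def using assms by (auto intro!: sum.neutral)

lemma E_order: "j \<le> k \<Longrightarrow> m + j < 2 * k \<Longrightarrow> E b k j (m, \<beta>) = 0"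
proof (induction k arbitrary: j m \<beta>)
  case 0 then show ?case by simp
next
  case (Suc k)
  have A: "ser_mult (Lser b) (E b k (j - 1)) (m, \<beta>) = 0" if "j \<noteq> 0"
  proof (rule ser_mult_zeroI)
    fix a \<gamma> assume "a \<le> m"
    show "Lser b (a, \<gamma>) = 0 \<or> E b k (j - 1) (m - a, \<lambda>i. \<beta> i - \<gamma> i) = 0"
    proof (cases "a = 1")
      case True
      then show ?thesis using Suc.prems that \<open>a \<le> m\<close> by (intro disjI2 Suc.IH) auto
    qed (simp add: Lser_def)
  qed
  have B: "ser_mult (Rser b) (E b k j) (m, \<beta>) = 0"
  proof (rule ser_mult_zeroI)
    fix a \<gamma> assume "a \<le> m"
    show "Rser b (a, \<gamma>) = 0 \<or> E b k j (m - a, \<lambda>i. \<beta> i - \<gamma> i) = 0"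
    proof (cases "2 \<le> a")
      case True
      show ?thesis
      proof (cases "j \<le> k")
        case True
        then show ?thesis using Suc.prems \<open>2 \<le> a\<close> \<open>a \<le> m\<close> by (intro disjI2 Suc.IH) auto
      next
        case False then show ?thesis by (simp add: E_gt)
      qed
    qed (simp add: Rser_def)
  qed
  show ?case using A B by simp
qed

lemma E_diag: "m \<noteq> k \<Longrightarrow> E b k k (m, \<beta>) = 0"
proof (induction k arbitrary: m \<beta>)
  case 0 then show ?case by (simp add: ser_one_def)
next
  case (Suc k)
  have A: "ser_mult (Lser b) (E b k k) (m, \<beta>) = 0"
  proof (rule ser_mult_zeroI)
    fix a \<gamma> assume "a \<le> m"
    show "Lser b (a, \<gamma>) = 0 \<or> E b k k (m - a, \<lambda>i. \<beta> i - \<gamma> i) = 0"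
    proof (cases "a = 1")
      case True
      then show ?thesis using Suc.prems \<open>a \<le> m\<close> by (intro disjI2 Suc.IH) auto
    qed (simp add: Lser_def)
  qed
  show ?case using A by (simp add: E_gt)
qed

lemma ser_mult_app: "ser_mult F G (m, \<beta>) = (\<Sum>a\<le>m. \<Sum>\<gamma>\<in>{\<gamma>. \<forall>i. \<gamma> i \<le> \<beta> i}.
      F (a, \<gamma>) * G (m - a, (\<lambda>i. \<beta> i - \<gamma> i)))"
  by (simp add: ser_mult_def)

lemma zero_eq_set: "{\<gamma>::nat\<Rightarrow>nat. \<forall>i. \<gamma> i = 0} = {\<lambda>_. 0}"
  by (auto simp: fun_eq_iff)

lemma zero_le_set: "{\<gamma>::nat\<Rightarrow>nat. \<forall>i. \<gamma> i \<le> 0} = {\<lambda>_. 0}"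
  by (auto simp: fun_eq_iff)

lemma E_diag_one:
  assumes "b 1 (\<lambda>_. 0) = 1"
  shows "E b k k (k, \<lambda>_. 0) = 1"
proof (induction k)
  case 0 then show ?case by (simp add: ser_one_def)
next
  case (Suc k)
  have "ser_mult (Lser b) (E b k k) (Suc k, \<lambda>_. 0) =
      (\<Sum>a\<le>Suc k. Lser b (a, \<lambda>_. 0) * E b k k (Suc k - a, \<lambda>_. 0))"
    by (simp add: ser_mult_app zero_eq_set)
  also have "\<dots> = (\<Sum>a\<le>Suc k. if a = 1 then 1 else 0)"
    by (intro sum.cong refl) (use assms in \<open>auto simp: Lser_def Suc.IH\<close>)
  also have "\<dots> = 1" by (simp add: sum.delta)
  finally show ?case by (simp add: E_gt)
qed

definition cf :: "(nat \<Rightarrow> (nat \<Rightarrow> nat) \<Rightarrow> complex) \<Rightarrow> ser3 \<Rightarrow> nat \<Rightarrow> ser" where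
  "cf b f j = (\<lambda>(m, \<beta>). \<Sum>k\<in>{j..m}. ser_mult (\<lambda>(a, \<gamma>). f k a \<gamma>) (E b k j) (m, \<beta>))"

lemma tri_swap:
  fixes h :: "nat \<Rightarrow> nat \<Rightarrow> complex"
  shows "(\<Sum>k\<le>m. \<Sum>j\<le>k. h k j) = (\<Sum>j\<le>m. \<Sum>k\<in>{j..m}. h k j)"
proof -
  have "(\<Sum>k\<le>m. \<Sum>j\<le>k. h k j) = (\<Sum>k\<le>m. \<Sum>j\<le>m. if j \<le> k then h k j else 0)"
  proof (rule sum.cong[OF refl])
    fix k assume "k \<in> {..m}"
    then have "{..m} \<inter> {j. j \<le> k} = {..k}" by auto
    then show "(\<Sum>j\<le>k. h k j) = (\<Sum>j\<le>m. if j \<le> k then h k j else 0)"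
      by (simp add: sum.If_cases)
  qed
  also have "\<dots> = (\<Sum>j\<le>m. \<Sum>k\<le>m. if j \<le> k then h k j else 0)"
    by (rule sum.swap)
  also have "\<dots> = (\<Sum>j\<le>m. \<Sum>k\<in>{j..m}. h k j)"
  proof (rule sum.cong[OF refl])
    fix j assume "j \<in> {..m}"
    have "{..m} \<inter> {k. j \<le> k} = {j..m}" by auto
    then show "(\<Sum>k\<le>m. if j \<le> k then h k j else 0) = (\<Sum>k\<in>{j..m}. h k j)"
      by (simp add: sum.If_cases)
  qed
  finally show ?thesis .
qed

lemma subst_expand:
  "subst_y f (phi_s b s) (m, \<beta>) = (\<Sum>j\<le>m. s ^ j * cf b f j (m, \<beta>))"
proof -
  have "subst_y f (phi_s b s) (m, \<beta>) =
     (\<Sum>k\<le>m. \<Sum>j\<le>k. s ^ j * ser_mult (\<lambda>(a, \<gamma>). f k a \<gamma>) (E b k j) (m, \<beta>))"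
    unfolding subst_y_def pow_expand by (simp add: ser_mult_sum_right)
  also have "\<dots> = (\<Sum>j\<le>m. s ^ j * cf b f j (m, \<beta>))"
    by (subst tri_swap) (simp add: cf_def sum_distrib_left)
  finally show ?thesis .
qed




lemma finite_le_set:
  assumes "valid_idx n \<beta>"
  shows "finite {\<gamma>::nat\<Rightarrow>nat. \<forall>i. \<gamma> i \<le> \<beta> i}"
proof -
  let ?M = "Max (\<beta> ` {..<n})"
  have "{\<gamma>::nat\<Rightarrow>nat. \<forall>i. \<gamma> i \<le> \<beta> i} \<subseteq>
     {f. \<forall>x. (x \<in> {..<n} \<longrightarrow> f x \<in> {..?M}) \<and> (x \<notin> {..<n} \<longrightarrow> f x = 0)}"
  proof
    fix f assume "f \<in> {\<gamma>::nat\<Rightarrow>nat. \<forall>i. \<gamma> i \<le> \<beta> i}"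
    then have f: "\<And>i. f i \<le> \<beta> i" by simp
    have "f x \<le> ?M" if "x < n" for x
    proof -
      have "\<beta> x \<le> ?M" using that by (intro Max_ge) auto
      then show ?thesis using f[of x] by linarith
    qed
    moreover have "f x = 0" if "\<not> x < n" for x
      using f[of x] assms that unfolding valid_idx_def by simp
    ultimately show "f \<in> {f. \<forall>x. (x \<in> {..<n} \<longrightarrow> f x \<in> {..?M}) \<and> (x \<notin> {..<n} \<longrightarrow> f x = 0)}"
      by simp
  qed
  moreover have "finite {f::nat\<Rightarrow>nat. \<forall>x. (x \<in> {..<n} \<longrightarrow> f x \<in> {..?M}) \<and> (x \<notin> {..<n} \<longrightarrow> f x = 0)}"
    by (rule finite_set_of_finite_funs) simp_all
  ultimately show ?thesis by (rule finite_subset)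
qed

lemma idx_size_less:
  assumes "valid_idx n \<beta>" "\<forall>i. \<gamma> i \<le> \<beta> i" "\<gamma> \<noteq> \<beta>"
  shows "idx_size n \<gamma> < idx_size n \<beta>"
proof -
  obtain i where i: "\<gamma> i \<noteq> \<beta> i" using assms(3) by auto
  have "i < n"
  proof (rule ccontr)
    assume "\<not> i < n"
    then have "\<beta> i = 0" using assms(1) unfolding valid_idx_def by simp
    then show False using i assms(2) by (metis le_zero_eq)
  qed
  have lt: "\<gamma> i < \<beta> i" using i assms(2) by (simp add: order.not_eq_order_implies_strict)
  show ?thesis unfolding idx_size_def
    by (rule sum_strict_mono_ex1) (use assms(2) lt \<open>i < n\<close> in auto)
qed




context
  fixes n :: nat and e :: "nat \<Rightarrow> ser" and EE :: "nat \<Rightarrow> nat \<Rightarrow> ser"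
begin

function sol :: "nat \<Rightarrow> nat \<Rightarrow> (nat \<Rightarrow> nat) \<Rightarrow> complex" where
  "sol j a \<beta> = (if valid_idx n \<beta> then e j (a + j, \<beta>)
     - (\<Sum>k\<in>{j<..a+j}. \<Sum>a'\<le>a+j. \<Sum>\<gamma>\<in>{\<gamma>. \<forall>i. \<gamma> i \<le> \<beta> i}.
          if a' + 2 * k \<le> a + 2 * j then sol k a' \<gamma> * EE k j (a + j - a', \<lambda>i. \<beta> i - \<gamma> i) else 0)
     - (\<Sum>\<gamma>\<in>{\<gamma>. \<forall>i. \<gamma> i \<le> \<beta> i}. if \<gamma> \<noteq> \<beta> then sol j a \<gamma> * EE j j (j, \<lambda>i. \<beta> i - \<gamma> i) else 0)
   else 0)"
  by pat_completeness auto
termination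
proof (relation "inv_image (less_than <*lex*> less_than) (\<lambda>(j, a, \<beta>). (a + j, idx_size n \<beta>))", goal_cases)
  case 1 show ?case by (intro wf_inv_image wf_lex_prod wf_less_than)
next
  case (2 j a \<beta> k a' \<gamma>)
  then show ?case by simp
next
  case (3 j a \<beta> \<gamma>)
  then show ?case by (simp add: idx_size_less)
qed

end

declare sol.simps[simp del]

lemma cf_sol:
  assumes b1: "b 1 (\<lambda>_. 0) = 1" and v: "valid_idx n \<beta>" and jm: "j \<le> m"
  shows "cf b (sol n e (E b)) j (m, \<beta>) = e j (m, \<beta>)"
proof -
  define g where "g = sol n e (E b)"
  define a where "a = m - j"
  have m: "m = a + j" using jm a_def by simp
  define S where "S = {\<gamma>::nat\<Rightarrow>nat. \<forall>i. \<gamma> i \<le> \<beta> i}"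
  have finS: "finite S" unfolding S_def using finite_le_set[OF v] .
  have bS: "\<beta> \<in> S" unfolding S_def by simp
  define X where "X k = (\<Sum>a'\<le>m. \<Sum>\<gamma>\<in>S. g k a' \<gamma> * E b k j (m - a', \<lambda>i. \<beta> i - \<gamma> i))" for k
  define Y where "Y k = (\<Sum>a'\<le>a+j. \<Sum>\<gamma>\<in>S.
          if a' + 2 * k \<le> a + 2 * j then g k a' \<gamma> * E b k j (a + j - a', \<lambda>i. \<beta> i - \<gamma> i) else 0)" for k
  define D where "D = (\<Sum>\<gamma>\<in>S. if \<gamma> \<noteq> \<beta> then g j a \<gamma> * E b j j (j, \<lambda>i. \<beta> i - \<gamma> i) else 0)"
  have sol_eq: "g j a \<beta> = e j (m, \<beta>) - (\<Sum>k\<in>{j<..m}. Y k) - D"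
    unfolding g_def Y_def D_def S_def m by (subst sol.simps) (simp add: v)
  have cf_eq: "cf b g j (m, \<beta>) = (\<Sum>k\<in>{j..m}. X k)"
    unfolding cf_def X_def S_def by (simp add: ser_mult_app)
  have "{j..m} = insert j {j<..m}" using jm by auto
  then have cf2: "cf b g j (m, \<beta>) = X j + (\<Sum>k\<in>{j<..m}. X k)"
    using cf_eq by simp
  have XY: "X k = Y k" if "k \<in> {j<..m}" for k
    unfolding X_def Y_def m[symmetric]
  proof (intro sum.cong refl)
    fix a' \<gamma> assume a': "a' \<in> {..m}"
    show "g k a' \<gamma> * E b k j (m - a', \<lambda>i. \<beta> i - \<gamma> i) =
      (if a' + 2 * k \<le> a + 2 * j then g k a' \<gamma> * E b k j (m - a', \<lambda>i. \<beta> i - \<gamma> i) else 0)"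
    proof (cases "a' + 2 * k \<le> a + 2 * j")
      case False
      then have "E b k j (m - a', \<lambda>i. \<beta> i - \<gamma> i) = 0"
        using that a' m by (intro E_order) auto
      then show ?thesis using False by simp
    qed simp
  qed
  have Xj: "X j = (\<Sum>\<gamma>\<in>S. g j a \<gamma> * E b j j (j, \<lambda>i. \<beta> i - \<gamma> i))"
  proof -
    have "X j = (\<Sum>a'\<le>m. if a' = a then (\<Sum>\<gamma>\<in>S. g j a \<gamma> * E b j j (j, \<lambda>i. \<beta> i - \<gamma> i)) else 0)"
      unfolding X_def
    proof (rule sum.cong[OF refl])
      fix a' assume a': "a' \<in> {..m}"
      show "(\<Sum>\<gamma>\<in>S. g j a' \<gamma> * E b j j (m - a', \<lambda>i. \<beta> i - \<gamma> i)) =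
        (if a' = a then (\<Sum>\<gamma>\<in>S. g j a \<gamma> * E b j j (j, \<lambda>i. \<beta> i - \<gamma> i)) else 0)"
      proof (cases "a' = a")
        case True then show ?thesis using m by simp
      next
        case False
        then have "m - a' \<noteq> j" using a' m by auto
        then show ?thesis using False by (simp add: E_diag)
      qed
    qed
    also have "\<dots> = (\<Sum>\<gamma>\<in>S. g j a \<gamma> * E b j j (j, \<lambda>i. \<beta> i - \<gamma> i))"
      using m by (simp add: sum.delta')
    finally show ?thesis .
  qed
  also have "\<dots> = (\<Sum>\<gamma>\<in>S. (if \<gamma> = \<beta> then g j a \<gamma> * E b j j (j, \<lambda>i. \<beta> i - \<gamma> i) else 0)
      + (if \<gamma> \<noteq> \<beta> then g j a \<gamma> * E b j j (j, \<lambda>i. \<beta> i - \<gamma> i) else 0))"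
    by (intro sum.cong refl) simp
  also have "\<dots> = g j a \<beta> * E b j j (j, \<lambda>i. \<beta> i - \<beta> i) + D"
    unfolding D_def sum.distrib using finS bS by (simp add: sum.delta')
  also have "\<dots> = g j a \<beta> + D"
    using E_diag_one[of b j] b1 by simp
  finally have "X j = g j a \<beta> + D" .
  then show ?thesis
    using cf2 XY sol_eq unfolding g_def[symmetric] by simp
qed




lemma conv_cong:
  assumes "\<And>m \<beta>. valid_idx n \<beta> \<Longrightarrow> F (m, \<beta>) = G (m, \<beta>)"
  shows "conv_tx n F = conv_tx n G"
  unfolding conv_tx_def using assms by auto

lemma Conv_f: "Conv_phi n b f = {s. conv_tx n (\<lambda>(m, \<beta>). \<Sum>j\<le>m. s ^ j * cf b f j (m, \<beta>))}"
  unfolding Conv_phi_def by (intro Collect_cong arg_cong[where f="conv_tx n"]) (auto simp: subst_expand)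

lemma Conv_sol:
  assumes b1: "b 1 (\<lambda>_. 0) = 1"
  shows "Conv_phi n b (sol n e (E b)) = {s. conv_tx n (\<lambda>(m, \<beta>). \<Sum>j\<le>m. s ^ j * e j (m, \<beta>))}"
  unfolding Conv_phi_def
proof (intro Collect_cong conv_cong)
  fix s m \<beta> assume v: "valid_idx n \<beta>"
  show "subst_y (sol n e (E b)) (phi_s b s) (m, \<beta>) = (case (m, \<beta>) of (m, \<beta>) \<Rightarrow> \<Sum>j\<le>m. s ^ j * e j (m, \<beta>))"
    using cf_sol[of b n \<beta>] b1 v by (simp add: subst_expand)
qed

lemma pow_le_max: "(C::real) ^ k \<le> (max \<bar>C\<bar> 1) ^ k"
proof -
  have "C ^ k \<le> \<bar>C\<bar> ^ k" by (metis abs_ge_self power_abs)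
  also have "\<dots> \<le> (max \<bar>C\<bar> 1) ^ k" by (intro power_mono) auto
  finally show ?thesis .
qed

definition stretch :: "nat \<Rightarrow> ser \<Rightarrow> ser" where
  "stretch D F = (\<lambda>(m, \<beta>). if D dvd m then F (m div D, \<beta>) else 0)"

lemma conv_stretch:
  assumes D: "1 \<le> D"
  shows "conv_tx n (stretch D F) = conv_tx n F"
proof
  assume "conv_tx n (stretch D F)"
  then obtain C :: real where C: "\<And>a \<gamma>. valid_idx n \<gamma> \<Longrightarrow> (a, \<gamma>) \<noteq> (0, \<lambda>_. 0) \<Longrightarrow>
      norm (stretch D F (a, \<gamma>)) \<le> C ^ (a + idx_size n \<gamma>)" unfolding conv_tx_def by blast
  define C' where "C' = max \<bar>C\<bar> 1"
  show "conv_tx n F" unfolding conv_tx_def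
  proof (intro exI[of _ "C' ^ D"] allI impI)
    fix a :: nat and \<gamma> assume h: "valid_idx n \<gamma> \<and> (a, \<gamma>) \<noteq> (0, \<lambda>_. 0)"
    then have "(D * a, \<gamma>) \<noteq> (0, \<lambda>_. 0)" using D by auto
    then have "norm (stretch D F (D * a, \<gamma>)) \<le> C ^ (D * a + idx_size n \<gamma>)" using C h by blast
    moreover have "stretch D F (D * a, \<gamma>) = F (a, \<gamma>)" using D by (simp add: stretch_def)
    moreover have "C ^ (D * a + idx_size n \<gamma>) \<le> C' ^ (D * a + idx_size n \<gamma>)"
      unfolding C'_def by (rule pow_le_max)
    moreover have "C' ^ (D * a + idx_size n \<gamma>) \<le> C' ^ (D * (a + idx_size n \<gamma>))"
      using D by (intro power_increasing) (auto simp: C'_def algebra_simps)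
    ultimately show "norm (F (a, \<gamma>)) \<le> (C' ^ D) ^ (a + idx_size n \<gamma>)"
      by (simp add: power_mult)
  qed
next
  assume "conv_tx n F"
  then obtain C :: real where C: "\<And>a \<gamma>. valid_idx n \<gamma> \<Longrightarrow> (a, \<gamma>) \<noteq> (0, \<lambda>_. 0) \<Longrightarrow>
      norm (F (a, \<gamma>)) \<le> C ^ (a + idx_size n \<gamma>)" unfolding conv_tx_def by blast
  define C' where "C' = max \<bar>C\<bar> 1"
  show "conv_tx n (stretch D F)" unfolding conv_tx_def
  proof (intro exI[of _ C'] allI impI)
    fix m :: nat and \<gamma> assume h: "valid_idx n \<gamma> \<and> (m, \<gamma>) \<noteq> (0, \<lambda>_. 0)"
    show "norm (stretch D F (m, \<gamma>)) \<le> C' ^ (m + idx_size n \<gamma>)"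
    proof (cases "D dvd m")
      case True
      then obtain q where q: "m = D * q" by blast
      have "(q, \<gamma>) \<noteq> (0, \<lambda>_. 0)" using h q by auto
      then have "norm (F (q, \<gamma>)) \<le> C ^ (q + idx_size n \<gamma>)" using C h by blast
      also have "\<dots> \<le> C' ^ (q + idx_size n \<gamma>)"
        unfolding C'_def by (rule pow_le_max)
      also have "\<dots> \<le> C' ^ (m + idx_size n \<gamma>)"
        using D q by (intro power_increasing) (auto simp: C'_def)
      finally show ?thesis using D q by (simp add: stretch_def)
    next
      case False then show ?thesis by (simp add: stretch_def C'_def)
    qed
  qed
qed




lemma poly_sum_ext:
  fixes p :: "complex poly"
  assumes "degree p \<le> m"
  shows "(\<Sum>i\<le>m. coeff p i * x ^ i) = poly p x"
proof -
  have "(\<Sum>i\<le>m. coeff p i * x ^ i) = (\<Sum>i\<le>degree p. coeff p i * x ^ i)"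
    by (rule sum.mono_neutral_right) (use assms in \<open>auto simp: coeff_eq_0\<close>)
  then show ?thesis by (simp only: poly_altdef)
qed

lemma part_g:
  assumes b1: "b 1 (\<lambda>_. 0) = 1"
  shows "\<exists>g. Conv_phi n b g = poly P -` Conv_phi n b f"
proof -
  define D where "D = max 1 (degree P)"
  have D1: "1 \<le> D" by (simp add: D_def)
  define eg where "eg i = (\<lambda>(m, \<beta>). if D dvd m then
      (\<Sum>j\<le>m div D. cf b f j (m div D, \<beta>) * coeff (P ^ j) i) else 0)" for i
  have key: "(\<lambda>(m, \<beta>). \<Sum>i\<le>m. s ^ i * eg i (m, \<beta>)) =
      stretch D (\<lambda>(m, \<beta>). \<Sum>j\<le>m. (poly P s) ^ j * cf b f j (m, \<beta>))" for s
  proof (rule ext, clarify)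
    fix m \<beta>
    show "(\<Sum>i\<le>m. s ^ i * eg i (m, \<beta>)) =
      stretch D (\<lambda>(m, \<beta>). \<Sum>j\<le>m. (poly P s) ^ j * cf b f j (m, \<beta>)) (m, \<beta>)"
    proof (cases "D dvd m")
      case True
      then obtain q where q: "m = D * q" by blast
      have qd: "m div D = q" using q D1 by simp
      have "(\<Sum>i\<le>m. s ^ i * eg i (m, \<beta>)) =
          (\<Sum>i\<le>m. \<Sum>j\<le>q. cf b f j (q, \<beta>) * (coeff (P ^ j) i * s ^ i))"
        using True qd by (simp add: eg_def sum_distrib_left algebra_simps)
      also have "\<dots> = (\<Sum>j\<le>q. cf b f j (q, \<beta>) * (\<Sum>i\<le>m. coeff (P ^ j) i * s ^ i))"
        by (subst sum.swap) (simp add: sum_distrib_left)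
      also have "\<dots> = (\<Sum>j\<le>q. cf b f j (q, \<beta>) * poly (P ^ j) s)"
      proof (rule sum.cong[OF refl])
        fix j assume "j \<in> {..q}"
        then have "degree (P ^ j) \<le> m"
          using degree_power_le[of P j] q
          by (metis D_def atMost_iff max.cobounded2 mult.commute mult_le_mono order_trans)
        then show "cf b f j (q, \<beta>) * (\<Sum>i\<le>m. coeff (P ^ j) i * s ^ i) = cf b f j (q, \<beta>) * poly (P ^ j) s"
          by (simp add: poly_sum_ext)
      qed
      finally show ?thesis using True qd by (simp add: stretch_def mult.commute)
    next
      case False then show ?thesis by (simp add: eg_def stretch_def)
    qed
  qed
  have "Conv_phi n b (sol n eg (E b)) = poly P -` Conv_phi n b f"
    unfolding Conv_sol[of b n eg, OF b1] Conv_f[of n b f] key conv_stretch[OF D1] by auto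
  then show ?thesis by blast
qed

lemma fact_pow_unbounded:
  assumes "s \<noteq> (0::complex)"
  shows "\<not> (\<forall>m\<ge>1. norm (s ^ m * fact m) \<le> C ^ m)"
proof
  assume H: "\<forall>m\<ge>1. norm (s ^ m * fact m) \<le> C ^ m"
  define x where "x = C / norm s"
  have ns: "norm s > 0" using assms by simp
  have "(\<lambda>m. inverse (fact m) * x ^ m) \<longlonglongrightarrow> 0"
    by (rule summable_LIMSEQ_zero[OF summable_exp])
  then have "eventually (\<lambda>m. norm (inverse (fact m) * x ^ m) < 1) sequentially"
    by (auto dest: order_tendstoD(2)[OF tendsto_norm, where a=1] simp: )
  then obtain M where M: "\<And>m. m \<ge> M \<Longrightarrow> norm (inverse (fact m) * x ^ m) < 1"
    by (auto simp: eventually_sequentially)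
  define m where "m = max M 1"
  have lt: "\<bar>x ^ m\<bar> / fact m < 1" using M[of m] by (simp add: m_def abs_mult divide_inverse mult.commute)
  have "norm s ^ m * fact m \<le> C ^ m" using H[rule_format, of m] by (simp add: m_def norm_mult norm_power)
  also have "C ^ m = x ^ m * norm s ^ m" using ns by (simp add: x_def power_divide)
  also have "\<dots> \<le> \<bar>x ^ m\<bar> * norm s ^ m" by (intro mult_right_mono) auto
  also have "\<dots> < fact m * norm s ^ m"
    using lt ns by (intro mult_strict_right_mono) (auto simp: divide_less_eq)
  finally show False by (simp add: mult.commute)
qed

lemma part_h:
  assumes b1: "b 1 (\<lambda>_. 0) = 1"
  shows "\<exists>h. Conv_phi n b h = (\<lambda>s. c * s) ` Conv_phi n b f"
proof (cases "c = 0")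
  case False
  define eh where "eh i = (\<lambda>(m, \<beta>). cf b f i (m, \<beta>) / c ^ i)" for i
  have key: "(\<lambda>(m, \<beta>). \<Sum>i\<le>m. s ^ i * eh i (m, \<beta>)) =
      (\<lambda>(m, \<beta>). \<Sum>j\<le>m. (s / c) ^ j * cf b f j (m, \<beta>))" for s
    by (auto simp: eh_def power_divide fun_eq_iff)
  have "Conv_phi n b (sol n eh (E b)) = (\<lambda>s. c * s) ` Conv_phi n b f"
  proof -
    have "Conv_phi n b (sol n eh (E b)) = {s. s / c \<in> Conv_phi n b f}"
      unfolding Conv_sol[of b n eh, OF b1] Conv_f[of n b f] key by simp
    also have "\<dots> = (\<lambda>s. c * s) ` Conv_phi n b f"
    proof (intro set_eqI iffI)
      fix s assume "s \<in> {s. s / c \<in> Conv_phi n b f}"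
      then show "s \<in> (\<lambda>s. c * s) ` Conv_phi n b f"
        using False by (intro image_eqI[of _ _ "s / c"]) auto
    next
      fix s assume "s \<in> (\<lambda>s. c * s) ` Conv_phi n b f"
      then show "s \<in> {s. s / c \<in> Conv_phi n b f}" using False by auto
    qed
    finally show ?thesis .
  qed
  then show ?thesis by blast
next
  case True
  show ?thesis
  proof (cases "Conv_phi n b f = {}")
    case True
    then show ?thesis by (intro exI[of _ f]) simp
  next
    case ne: False
    define eh :: "nat \<Rightarrow> ser" where "eh i = (\<lambda>(m, \<beta>). if i = m \<and> \<beta> = (\<lambda>_. 0) then (fact m :: complex) else 0)" for i
    have key: "(\<lambda>(m, \<beta>). \<Sum>i\<le>m. s ^ i * eh i (m, \<beta>)) =
        (\<lambda>(m, \<beta>). if \<beta> = (\<lambda>_. 0) then s ^ m * fact m else 0)" for s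
      by (auto simp: eh_def fun_eq_iff if_distrib cong: if_cong)
    have "Conv_phi n b (sol n eh (E b)) = {0}"
    proof -
      have "conv_tx n (\<lambda>(m, \<beta>). if \<beta> = (\<lambda>_. 0) then s ^ m * fact m else 0) \<longleftrightarrow> s = 0" for s
      proof
        assume "conv_tx n (\<lambda>(m, \<beta>). if \<beta> = (\<lambda>_. 0) then s ^ m * fact m else 0)"
        then obtain C :: real where C: "\<And>a \<gamma>. valid_idx n \<gamma> \<Longrightarrow> (a, \<gamma>) \<noteq> (0, \<lambda>_. 0) \<Longrightarrow>
           norm (if \<gamma> = (\<lambda>_. 0) then s ^ a * fact a else 0) \<le> C ^ (a + idx_size n \<gamma>)"
          unfolding conv_tx_def by auto
        have "\<forall>m\<ge>1. norm (s ^ m * fact m) \<le> C ^ m"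
        proof (intro allI impI)
          fix m :: nat assume "m \<ge> 1"
          then show "norm (s ^ m * fact m) \<le> C ^ m"
            using C[of "\<lambda>_. 0" m] by (simp add: valid_idx_def idx_size_def)
        qed
        then show "s = 0" using fact_pow_unbounded[of s C] by blast
      next
        assume "s = 0"
        then show "conv_tx n (\<lambda>(m, \<beta>). if \<beta> = (\<lambda>_. 0) then s ^ m * fact m else 0)"
          unfolding conv_tx_def by (intro exI[of _ 1]) (auto simp: zero_power)
      qed
      then show ?thesis unfolding Conv_sol[of b n eh, OF b1] key by auto
    qed
    also have "\<dots> = (\<lambda>s. c * s) ` Conv_phi n b f" using ne True by auto
    finally show ?thesis by blast
  qed
qed



theorem mainTheorem6:
  fixes n :: nat
    and b :: "nat \<Rightarrow> (nat \<Rightarrow> nat) \<Rightarrow> complex"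
    and f :: ser3
    and c :: complex
    and P :: "complex poly"
  assumes phi_conv: "conv_tx n (phi_ser b)"
    and b_conv: "\<forall>j\<ge>1. conv_x n (b j)"
    and b1: "b 1 (\<lambda>_. 0) = 1"
    and monic: "lead_coeff P = 1"
  shows "\<exists>g h :: ser3. Conv_phi n b g = poly P -` Conv_phi n b f
           \<and> Conv_phi n b h = (\<lambda>s. c * s) ` Conv_phi n b f"
  using part_g[of b n P f, OF b1] part_h[of b n c f, OF b1] by blast

end
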